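(* Let $H$ be an Abelian group, $X$ a simplicial set, $\gamma:X_2\to H$ a normalized 2-cocycle and $\eta$ its associated twisting function. Let $\mathrm{No}(X,H,\gamma)$ be the set of normalized 1-cochains $\alpha:X_1\to H$ with $\partial\alpha=\gamma$. Then for every $\alpha\in\mathrm{No}(X,H,\gamma)$ there is a unique section $\varphi_\alpha$ of $\pi_\eta:N(H)\times_\eta X\to X$ given in degrees $0,1,2$ by $x\mapsto(0,x)$, $x\mapsto(\alpha(x),x)$, $x\mapsto((\alpha(d_2x),\alpha(d_1x)-\alpha(d_2x)),x)$, and the map $\mathrm{No}(X,H,\gamma)\to\mathrm{Sec}(\pi_\eta)$, $\alpha\mapsto\varphi_\alpha$, is a bijection.
   Context: $N(H)$ is the nerve of $H$: $N(H)_n=H^n$, $d_0$ drops the first entry, $d_n$ drops the last, $d_i$ for $0<i<n$ replaces $a_i,a_{i+1}$ by $a_i+a_{i+1}$, $s_j$ inserts $0$ after the $j$-th entry. A normalized $k$-cochain is a function $X_k\to H$ vanishing on degenerate simplices; $\partial\alpha(x)=\alpha(d_0x)-\alpha(d_1x)+\alpha(d_2x)$; a normalized 2-cocycle is a normalized 2-cochain $\gamma$ with $\sum_{i=0}^3(-1)^i\gamma(d_i\sigma)=0$ for $\sigma\in X_3$. The associated twisting function: $\eta_1=0$, $\eta_2=\gamma$, $\eta_n(x)=(\gamma(d_3\cdots d_nx),\eta_{n-1}(d_1x)-\eta_{n-1}(d_0x))\in H^{n-1}$. $N(H)\times_\eta X$ has $n$-simplices $H^n\times X_n$, $d_0(g,x)=(d_0g+\eta_n(x),d_0x)$,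 other faces and degeneracies componentwise; $\pi_\eta$ is the projection; $\mathrm{Sec}(\pi_\eta)$ is the set of simplicial maps $s:X\to N(H)\times_\eta X$ with $\pi_\eta s=\mathrm{id}$. *)

theory Defs
  imports Main
begin

text \<open>A simplicial set is given by carriers X n (the n-simplices), face maps
  d n i : X n -> X (n-1) (for n >= 1, i <= n; the first argument is the degree of the
  source) and degeneracies s n j : X n -> X (n+1) (for j <= n), subject to the
  simplicial identities.\<close>

definition simplicial_set ::
  "(nat \<Rightarrow> 'x set) \<Rightarrow> (nat \<Rightarrow> nat \<Rightarrow> 'x \<Rightarrow> 'x) \<Rightarrow> (nat \<Rightarrow> nat \<Rightarrow> 'x \<Rightarrow> 'x) \<Rightarrow> bool" where
  "simplicial_set X d s \<longleftrightarrow>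
     (\<forall>n i x. i \<le> Suc n \<longrightarrow> x \<in> X (Suc n) \<longrightarrow> d (Suc n) i x \<in> X n) \<and>
     (\<forall>n j x. j \<le> n \<longrightarrow> x \<in> X n \<longrightarrow> s n j x \<in> X (Suc n)) \<and>
     \<comment> \<open>d_i d_j = d_{j-1} d_i for i < j\<close>
     (\<forall>n i j x. i < j \<longrightarrow> j \<le> Suc (Suc n) \<longrightarrow> x \<in> X (Suc (Suc n)) \<longrightarrow>
        d (Suc n) i (d (Suc (Suc n)) j x) = d (Suc n) (j - 1) (d (Suc (Suc n)) i x)) \<and>
     \<comment> \<open>d_i s_j = s_{j-1} d_i for i < j\<close>
     (\<forall>n i j x. i < j \<longrightarrow> j \<le> Suc n \<longrightarrow> x \<in> X (Suc n) \<longrightarrow>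
        d (Suc (Suc n)) i (s (Suc n) j x) = s n (j - 1) (d (Suc n) i x)) \<and>
     \<comment> \<open>d_j s_j = id = d_{j+1} s_j\<close>
     (\<forall>n j x. j \<le> n \<longrightarrow> x \<in> X n \<longrightarrow>
        d (Suc n) j (s n j x) = x \<and> d (Suc n) (Suc j) (s n j x) = x) \<and>
     \<comment> \<open>d_i s_j = s_j d_{i-1} for i > j+1\<close>
     (\<forall>n i j x. Suc j < i \<longrightarrow> i \<le> Suc (Suc n) \<longrightarrow> x \<in> X (Suc n) \<longrightarrow>
        d (Suc (Suc n)) i (s (Suc n) j x) = s n j (d (Suc n) (i - 1) x)) \<and>
     \<comment> \<open>s_i s_j = s_{j+1} s_i for i <= j\<close>
     (\<forall>n i j x. i \<le> j \<longrightarrow> j \<le> n \<longrightarrow> x \<in> X n \<longrightarrow>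
        s (Suc n) i (s n j x) = s (Suc n) (Suc j) (s n i x))"

definition normalized_1_cochain ::
  "(nat \<Rightarrow> 'x set) \<Rightarrow> (nat \<Rightarrow> nat \<Rightarrow> 'x \<Rightarrow> 'x) \<Rightarrow> ('x \<Rightarrow> 'h::ab_group_add) \<Rightarrow> bool" where
  "normalized_1_cochain X s \<alpha> \<longleftrightarrow>
     (\<forall>y\<in>X 0. \<alpha> (s 0 0 y) = 0) \<and> (\<forall>x. x \<notin> X 1 \<longrightarrow> \<alpha> x = undefined)"

definition coboundary1 ::
  "(nat \<Rightarrow> nat \<Rightarrow> 'x \<Rightarrow> 'x) \<Rightarrow> ('x \<Rightarrow> 'h::ab_group_add) \<Rightarrow> 'x \<Rightarrow> 'h" where
  "coboundary1 d \<alpha> x = \<alpha> (d 2 0 x) - \<alpha> (d 2 1 x) + \<alpha> (d 2 2 x)"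

definition normalized_2_cocycle ::
  "(nat \<Rightarrow> 'x set) \<Rightarrow> (nat \<Rightarrow> nat \<Rightarrow> 'x \<Rightarrow> 'x) \<Rightarrow> (nat \<Rightarrow> nat \<Rightarrow> 'x \<Rightarrow> 'x)
     \<Rightarrow> ('x \<Rightarrow> 'h::ab_group_add) \<Rightarrow> bool" where
  "normalized_2_cocycle X d s \<gamma> \<longleftrightarrow>
     (\<forall>y\<in>X 1. \<gamma> (s 1 0 y) = 0 \<and> \<gamma> (s 1 1 y) = 0) \<and>
     (\<forall>\<sigma>\<in>X 3. \<gamma> (d 3 0 \<sigma>) - \<gamma> (d 3 1 \<sigma>) + \<gamma> (d 3 2 \<sigma>) - \<gamma> (d 3 3 \<sigma>) = 0)"

definition No ::
  "(nat \<Rightarrow> 'x set) \<Rightarrow> (nat \<Rightarrow> nat \<Rightarrow> 'x \<Rightarrow> 'x) \<Rightarrow> (nat \<Rightarrow> nat \<Rightarrow> 'x \<Rightarrow> 'x)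
     \<Rightarrow> ('x \<Rightarrow> 'h::ab_group_add) \<Rightarrow> ('x \<Rightarrow> 'h) set" where
  "No X d s \<gamma> = {\<alpha>. normalized_1_cochain X s \<alpha> \<and> (\<forall>x\<in>X 2. coboundary1 d \<alpha> x = \<gamma> x)}"

text \<open>The nerve N(H): n-simplices are lists of length n.\<close>

definition nerve_face :: "nat \<Rightarrow> nat \<Rightarrow> 'h::ab_group_add list \<Rightarrow> 'h list" where
  "nerve_face n i g =
     (if i = 0 then tl g
      else if i = n then butlast g
      else take (i - 1) g @ [g ! (i - 1) + g ! i] @ drop (Suc i) g)"

definition nerve_degen :: "nat \<Rightarrow> 'h::ab_group_add list \<Rightarrow> 'h list" where
  "nerve_degen j g = take j g @ [0] @ drop j g"

fun down_to_2 :: "(nat \<Rightarrow> nat \<Rightarrow> 'x \<Rightarrow> 'x) \<Rightarrow> nat \<Rightarrow> 'x \<Rightarrow> 'x" where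
  "down_to_2 d (Suc (Suc (Suc k))) x = down_to_2 d (Suc (Suc k)) (d (Suc (Suc (Suc k))) (Suc (Suc (Suc k))) x)"
| "down_to_2 d _ x = x"

text \<open>The twisting function: eta n x is a list of length n-1 (n >= 1).\<close>

fun eta :: "(nat \<Rightarrow> nat \<Rightarrow> 'x \<Rightarrow> 'x) \<Rightarrow> ('x \<Rightarrow> 'h::ab_group_add) \<Rightarrow> nat \<Rightarrow> 'x \<Rightarrow> 'h list" where
  "eta d \<gamma> 0 x = []"
| "eta d \<gamma> (Suc 0) x = []"
| "eta d \<gamma> (Suc (Suc 0)) x = [\<gamma> x]"
| "eta d \<gamma> (Suc (Suc (Suc k))) x =
     \<gamma> (down_to_2 d (Suc (Suc (Suc k))) x) #
     map2 (-) (eta d \<gamma> (Suc (Suc k)) (d (Suc (Suc (Suc k))) 1 x))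
              (eta d \<gamma> (Suc (Suc k)) (d (Suc (Suc (Suc k))) 0 x))"

definition tw_simplices :: "(nat \<Rightarrow> 'x set) \<Rightarrow> nat \<Rightarrow> ('h list \<times> 'x) set" where
  "tw_simplices X n = {(g, x). length g = n \<and> x \<in> X n}"

definition tw_face ::
  "(nat \<Rightarrow> nat \<Rightarrow> 'x \<Rightarrow> 'x) \<Rightarrow> ('x \<Rightarrow> 'h::ab_group_add) \<Rightarrow> nat \<Rightarrow> nat
     \<Rightarrow> 'h list \<times> 'x \<Rightarrow> 'h list \<times> 'x" where
  "tw_face d \<gamma> n i gx =
     (case gx of (g, x) \<Rightarrow>
        if i = 0 then (map2 (+) (nerve_face n 0 g) (eta d \<gamma> n x), d n 0 x)
        else (nerve_face n i g, d n i x))"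

definition tw_degen ::
  "(nat \<Rightarrow> nat \<Rightarrow> 'x \<Rightarrow> 'x) \<Rightarrow> nat \<Rightarrow> nat \<Rightarrow> 'h::ab_group_add list \<times> 'x \<Rightarrow> 'h list \<times> 'x" where
  "tw_degen s n j gx = (case gx of (g, x) \<Rightarrow> (nerve_degen j g, s n j x))"

definition Sec ::
  "(nat \<Rightarrow> 'x set) \<Rightarrow> (nat \<Rightarrow> nat \<Rightarrow> 'x \<Rightarrow> 'x) \<Rightarrow> (nat \<Rightarrow> nat \<Rightarrow> 'x \<Rightarrow> 'x)
     \<Rightarrow> ('x \<Rightarrow> 'h::ab_group_add) \<Rightarrow> (nat \<Rightarrow> 'x \<Rightarrow> 'h list \<times> 'x) set" where
  "Sec X d s \<gamma> = {\<phi>.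
     (\<forall>n x. x \<notin> X n \<longrightarrow> \<phi> n x = undefined) \<and>
     (\<forall>n. \<forall>x\<in>X n. \<phi> n x \<in> tw_simplices X n) \<and>
     (\<forall>n i. \<forall>x\<in>X (Suc n). i \<le> Suc n \<longrightarrow> \<phi> n (d (Suc n) i x) = tw_face d \<gamma> (Suc n) i (\<phi> (Suc n) x)) \<and>
     (\<forall>n j. \<forall>x\<in>X n. j \<le> n \<longrightarrow> \<phi> (Suc n) (s n j x) = tw_degen s n j (\<phi> n x)) \<and>
     (\<forall>n. \<forall>x\<in>X n. snd (\<phi> n x) = x)}"

definition low_values ::
  "(nat \<Rightarrow> 'x set) \<Rightarrow> (nat \<Rightarrow> nat \<Rightarrow> 'x \<Rightarrow> 'x) \<Rightarrow> ('x \<Rightarrow> 'h::ab_group_add)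
     \<Rightarrow> (nat \<Rightarrow> 'x \<Rightarrow> 'h list \<times> 'x) \<Rightarrow> bool" where
  "low_values X d \<alpha> \<phi> \<longleftrightarrow>
     (\<forall>x\<in>X 0. \<phi> 0 x = ([], x)) \<and>
     (\<forall>x\<in>X 1. \<phi> 1 x = ([\<alpha> x], x)) \<and>
     (\<forall>x\<in>X 2. \<phi> 2 x = ([\<alpha> (d 2 2 x), \<alpha> (d 2 1 x) - \<alpha> (d 2 2 x)], x))"

end

theory Submission
  imports Defs
begin



lemma nf_diff:
  fixes a :: "nat \<Rightarrow> 'h::ab_group_add"
  assumes "1 \<le> i" "i \<le> Suc n"
  shows "nerve_face (Suc n) i (map (\<lambda>k. a k - a (k - 1)) [1..<Suc (Suc n)])
       = map (\<lambda>k. a (if k < i then k else Suc k) - a (if k - 1 < i then k - 1 else Suc (k - 1))) [1..<Suc n]"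
proof (cases "i = Suc n")
  case True
  then show ?thesis unfolding nerve_face_def
    by (intro nth_equalityI) (auto simp: nth_butlast simp del: upt_Suc)
next
  case False
  then have i: "i \<le> n" "i \<noteq> 0" using assms by auto
  show ?thesis
  proof (intro nth_equalityI)
    show "length (nerve_face (Suc n) i (map (\<lambda>k. a k - a (k - 1)) [1..<Suc (Suc n)])) =
      length (map (\<lambda>k. a (if k < i then k else Suc k) - a (if k - 1 < i then k - 1 else Suc (k - 1))) [1..<Suc n])"
      using i False unfolding nerve_face_def by (auto simp del: upt_Suc)
  next
    fix t assume t: "t < length (nerve_face (Suc n) i (map (\<lambda>k. a k - a (k - 1)) [1..<Suc (Suc n)]))"
    then have tn: "t < n" using i False unfolding nerve_face_def by (auto simp del: upt_Suc)
    consider "t < i - 1" | "t = i - 1" | "t > i - 1" by linarith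
    then show "nerve_face (Suc n) i (map (\<lambda>k. a k - a (k - 1)) [1..<Suc (Suc n)]) ! t =
         map (\<lambda>k. a (if k < i then k else Suc k) - a (if k - 1 < i then k - 1 else Suc (k - 1))) [1..<Suc n] ! t"
    proof cases
      case 1 then show ?thesis using i False tn unfolding nerve_face_def
        by (auto simp: nth_append simp del: upt_Suc)
    next
      case 2 then show ?thesis using i False tn unfolding nerve_face_def
        by (auto simp: nth_append simp del: upt_Suc)
    next
      case 3 then show ?thesis using i False tn unfolding nerve_face_def
        by (auto simp: nth_append simp del: upt_Suc)
    qed
  qed
qed

lemma nd_diff:
  fixes a :: "nat \<Rightarrow> 'h::ab_group_add"
  assumes "j \<le> n"
  shows "nerve_degen j (map (\<lambda>k. a k - a (k - 1)) [1..<Suc n])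
       = map (\<lambda>k. a (if k \<le> j then k else k - 1) - a (if k - 1 \<le> j then k - 1 else k - 2)) [1..<Suc (Suc n)]"
proof (intro nth_equalityI)
  show "length (nerve_degen j (map (\<lambda>k. a k - a (k - 1)) [1..<Suc n])) =
    length (map (\<lambda>k. a (if k \<le> j then k else k - 1) - a (if k - 1 \<le> j then k - 1 else k - 2)) [1..<Suc (Suc n)])"
    using assms unfolding nerve_degen_def by (auto simp del: upt_Suc)
next
  fix t assume "t < length (nerve_degen j (map (\<lambda>k. a k - a (k - 1)) [1..<Suc n]))"
  then have tn: "t < Suc n" using assms unfolding nerve_degen_def by (auto simp del: upt_Suc)
  consider "t < j" | "t = j" | "t > j" by linarith
  then show "nerve_degen j (map (\<lambda>k. a k - a (k - 1)) [1..<Suc n]) ! t =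
    map (\<lambda>k. a (if k \<le> j then k else k - 1) - a (if k - 1 \<le> j then k - 1 else k - 2)) [1..<Suc (Suc n)] ! t"
  proof cases
    case 1 then show ?thesis using assms tn unfolding nerve_degen_def by (auto simp: nth_append simp del: upt_Suc)
  next
    case 2 then show ?thesis using assms tn unfolding nerve_degen_def by (auto simp: nth_append simp del: upt_Suc)
  next
    case 3 then show ?thesis using assms tn unfolding nerve_degen_def by (auto simp: nth_append simp del: upt_Suc)
  qed
qed

lemma n0_diff:
  fixes a c :: "nat \<Rightarrow> 'h::ab_group_add"
  shows "map2 (+) (tl (map (\<lambda>k. a k - a (k - 1)) [1..<Suc (Suc n)])) (map (\<lambda>k. c (Suc k) - c k) [1..<Suc n])
       = map (\<lambda>k. (c (Suc k) + a (Suc k)) - (c k + a k)) [1..<Suc n]"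
  by (intro nth_equalityI) (auto simp: nth_tl algebra_simps simp del: upt_Suc)




fun Top :: "(nat \<Rightarrow> nat \<Rightarrow> 'x \<Rightarrow> 'x) \<Rightarrow> nat \<Rightarrow> nat \<Rightarrow> 'x \<Rightarrow> 'x" where
  "Top d 0 m x = x"
| "Top d (Suc n) m x = (if Suc n \<le> m then x else Top d n m (d (Suc n) (Suc n) x))"

fun Mv :: "(nat \<Rightarrow> nat \<Rightarrow> 'x \<Rightarrow> 'x) \<Rightarrow> nat \<Rightarrow> nat \<Rightarrow> 'x \<Rightarrow> 'x" where
  "Mv d p 0 y = y"
| "Mv d p (Suc k) y = (if Suc k \<le> p then y else Mv d p k (d (Suc k) p y))"

definition Gf :: "(nat \<Rightarrow> nat \<Rightarrow> 'x \<Rightarrow> 'x) \<Rightarrow> nat \<Rightarrow> nat \<Rightarrow> nat \<Rightarrow> 'x \<Rightarrow> 'x" where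
  "Gf d p n k x = Mv d p k (Top d n k x)"

locale ss =
  fixes X :: "nat \<Rightarrow> 'x set" and d :: "nat \<Rightarrow> nat \<Rightarrow> 'x \<Rightarrow> 'x" and s :: "nat \<Rightarrow> nat \<Rightarrow> 'x \<Rightarrow> 'x"
  assumes ss: "simplicial_set X d s"
begin

lemmas ssc = ss[unfolded simplicial_set_def]

lemma face_in: "i \<le> Suc n \<Longrightarrow> x \<in> X (Suc n) \<Longrightarrow> d (Suc n) i x \<in> X n"
  using conjunct1[OF ssc] by blast
lemma degen_in: "j \<le> n \<Longrightarrow> x \<in> X n \<Longrightarrow> s n j x \<in> X (Suc n)"
  using conjunct1[OF conjunct2[OF ssc]] by blast
lemma dd: "i < j \<Longrightarrow> j \<le> Suc (Suc n) \<Longrightarrow> x \<in> X (Suc (Suc n)) \<Longrightarrow>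
        d (Suc n) i (d (Suc (Suc n)) j x) = d (Suc n) (j - 1) (d (Suc (Suc n)) i x)"
  using conjunct1[OF conjunct2[OF conjunct2[OF ssc]]] by blast
lemma ds_lt: "i < j \<Longrightarrow> j \<le> Suc n \<Longrightarrow> x \<in> X (Suc n) \<Longrightarrow>
        d (Suc (Suc n)) i (s (Suc n) j x) = s n (j - 1) (d (Suc n) i x)"
  using conjunct1[OF conjunct2[OF conjunct2[OF conjunct2[OF ssc]]]] by blast
lemma ds_id1: "j \<le> n \<Longrightarrow> x \<in> X n \<Longrightarrow> d (Suc n) j (s n j x) = x"
  using conjunct1[OF conjunct2[OF conjunct2[OF conjunct2[OF conjunct2[OF ssc]]]]] by blast
lemma ds_id2: "j \<le> n \<Longrightarrow> x \<in> X n \<Longrightarrow> d (Suc n) (Suc j) (s n j x) = x"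
  using conjunct1[OF conjunct2[OF conjunct2[OF conjunct2[OF conjunct2[OF ssc]]]]] by blast
lemma ds_gt: "Suc j < i \<Longrightarrow> i \<le> Suc (Suc n) \<Longrightarrow> x \<in> X (Suc n) \<Longrightarrow>
        d (Suc (Suc n)) i (s (Suc n) j x) = s n j (d (Suc n) (i - 1) x)"
  using conjunct1[OF conjunct2[OF conjunct2[OF conjunct2[OF conjunct2[OF conjunct2[OF ssc]]]]]] by blast

lemma Top_in: "m \<le> n \<Longrightarrow> x \<in> X n \<Longrightarrow> Top d n m x \<in> X m"
proof (induction n arbitrary: x)
  case 0 then show ?case by simp
next
  case (Suc n) then show ?case
    by (cases "Suc n \<le> m") (auto intro: face_in)
qed

lemma Top_self: "Top d n n x = x"
  by (cases n) auto

lemma Top_Suc: "m \<le> n \<Longrightarrow> Top d (Suc n) m x = Top d n m (d (Suc n) (Suc n) x)"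
  by simp

lemma Mv_in: "p \<le> k \<Longrightarrow> y \<in> X k \<Longrightarrow> Mv d p k y \<in> X p"
proof (induction k arbitrary: y)
  case 0 then show ?case by simp
next
  case (Suc k)
  show ?case
  proof (cases "Suc k \<le> p")
    case True
    have "Mv d p (Suc k) y = y" using True by simp
    then show ?thesis using Suc.prems True by (metis le_antisym)
  next
    case False
    then have "d (Suc k) p y \<in> X k" using Suc.prems face_in by simp
    then show ?thesis using False Suc.IH by simp
  qed
qed

lemma Mv_self: "Mv d p p y = y"
  by (cases p) auto

lemma Mv_Suc: "p \<le> k \<Longrightarrow> Mv d p (Suc k) y = Mv d p k (d (Suc k) p y)"
  by simp

lemma Gf_in: "p \<le> k \<Longrightarrow> k \<le> n \<Longrightarrow> x \<in> X n \<Longrightarrow> Gf d p n k x \<in> X p"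
  unfolding Gf_def by (intro Mv_in Top_in) auto

lemma Top_face_hi: "m < i \<Longrightarrow> i \<le> Suc n \<Longrightarrow> m \<le> n \<Longrightarrow> x \<in> X (Suc n) \<Longrightarrow>
   Top d n m (d (Suc n) i x) = Top d (Suc n) m x"
proof (induction n arbitrary: x i)
  case 0 then have "i = 1" "m = 0" by auto
  with 0 show ?case by (simp add: Top_self)
next
  case (Suc n)
  show ?case
  proof (cases "m = Suc n")
    case True
    then have "i = Suc (Suc n)" using Suc.prems by auto
    then show ?thesis using True by (simp add: Top_self)
  next
    case False
    then have mn: "m \<le> n" using Suc.prems by auto
    show ?thesis
    proof (cases "i = Suc (Suc n)")
      case True then show ?thesis using mn by simp
    next
      case False
      then have i: "i \<le> Suc n" using Suc.prems by auto
      have e: "d (Suc n) (Suc n) (d (Suc (Suc n)) i x) = d (Suc n) i (d (Suc (Suc n)) (Suc (Suc n)) x)"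
        using dd[of i "Suc (Suc n)" n x] i Suc.prems by simp
      have x': "d (Suc (Suc n)) (Suc (Suc n)) x \<in> X (Suc n)" using Suc.prems face_in by blast
      have "Top d (Suc n) m (d (Suc (Suc n)) i x) = Top d n m (d (Suc n) i (d (Suc (Suc n)) (Suc (Suc n)) x))"
        using mn e by simp
      also have "\<dots> = Top d (Suc n) m (d (Suc (Suc n)) (Suc (Suc n)) x)"
        using Suc.IH[OF _ i mn x'] Suc.prems by simp
      also have "\<dots> = Top d (Suc (Suc n)) m x" using mn by simp
      finally show ?thesis .
    qed
  qed
qed

lemma Top_face_lo: "i \<le> m \<Longrightarrow> m \<le> n \<Longrightarrow> x \<in> X (Suc n) \<Longrightarrow>
   Top d n m (d (Suc n) i x) = d (Suc m) i (Top d (Suc n) (Suc m) x)"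
proof (induction n arbitrary: x)
  case 0 then show ?case by (simp add: Top_self)
next
  case (Suc n)
  show ?case
  proof (cases "m = Suc n")
    case True then show ?thesis using Suc.prems by (simp add: Top_self)
  next
    case False
    then have mn: "m \<le> n" using Suc.prems by auto
    have e: "d (Suc n) (Suc n) (d (Suc (Suc n)) i x) = d (Suc n) i (d (Suc (Suc n)) (Suc (Suc n)) x)"
      using dd[of i "Suc (Suc n)" n x] mn Suc.prems by simp
    have x': "d (Suc (Suc n)) (Suc (Suc n)) x \<in> X (Suc n)" using Suc.prems face_in by blast
    have "Top d (Suc n) m (d (Suc (Suc n)) i x) = Top d n m (d (Suc n) i (d (Suc (Suc n)) (Suc (Suc n)) x))"
      using mn e by simp
    also have "\<dots> = d (Suc m) i (Top d (Suc n) (Suc m) (d (Suc (Suc n)) (Suc (Suc n)) x))"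
      using Suc.IH[OF _ mn x'] Suc.prems by simp
    also have "\<dots> = d (Suc m) i (Top d (Suc (Suc n)) (Suc m) x)" using mn by simp
    finally show ?thesis .
  qed
qed

lemma Top_comp: "m \<le> k \<Longrightarrow> k \<le> n \<Longrightarrow> Top d k m (Top d n k x) = Top d n m x"
proof (induction n arbitrary: x)
  case 0 then show ?case by simp
next
  case (Suc n)
  show ?case
  proof (cases "k = Suc n")
    case True then show ?thesis by (simp add: Top_self)
  next
    case False
    then have "k \<le> n" using Suc.prems by auto
    then show ?thesis using Suc by simp
  qed
qed

lemma Mv_face_ge: "p \<le> i \<Longrightarrow> i \<le> k \<Longrightarrow> y \<in> X (Suc k) \<Longrightarrow>
   Mv d p k (d (Suc k) i y) = Mv d p (Suc k) y"
proof (induction k arbitrary: y i)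
  case 0 then show ?case by simp
next
  case (Suc k)
  show ?case
  proof (cases "i = p")
    case True then show ?thesis using Suc.prems by simp
  next
    case False
    then have pi: "p < i" using Suc.prems by auto
    then have pk: "p \<le> k" using Suc.prems by auto
    have e: "d (Suc k) p (d (Suc (Suc k)) i y) = d (Suc k) (i - 1) (d (Suc (Suc k)) p y)"
      using dd[of p i k y] pi Suc.prems by simp
    have y': "d (Suc (Suc k)) p y \<in> X (Suc k)" using Suc.prems pk face_in by simp
    have "Mv d p (Suc k) (d (Suc (Suc k)) i y) = Mv d p k (d (Suc k) (i - 1) (d (Suc (Suc k)) p y))"
      using pk e by simp
    also have "\<dots> = Mv d p (Suc k) (d (Suc (Suc k)) p y)"
      using Suc.IH[OF _ _ y', of "i - 1"] pi Suc.prems by simp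
    also have "\<dots> = Mv d p (Suc (Suc k)) y" using pk by simp
    finally show ?thesis .
  qed
qed

lemma Mv_face_lt: "i < p \<Longrightarrow> p \<le> k \<Longrightarrow> y \<in> X (Suc k) \<Longrightarrow>
   Mv d p k (d (Suc k) i y) = d (Suc p) i (Mv d (Suc p) (Suc k) y)"
proof (induction k arbitrary: y)
  case 0 then show ?case by simp
next
  case (Suc k)
  show ?case
  proof (cases "p = Suc k")
    case True then show ?thesis using Suc.prems by (simp add: Mv_self)
  next
    case False
    then have pk: "p \<le> k" using Suc.prems by auto
    have e: "d (Suc k) i (d (Suc (Suc k)) (Suc p) y) = d (Suc k) p (d (Suc (Suc k)) i y)"
      using dd[of i "Suc p" k y] pk Suc.prems by simp
    have y': "d (Suc (Suc k)) (Suc p) y \<in> X (Suc k)" using Suc.prems pk face_in by simp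
    have "Mv d p (Suc k) (d (Suc (Suc k)) i y) = Mv d p k (d (Suc k) i (d (Suc (Suc k)) (Suc p) y))"
      using pk e by simp
    also have "\<dots> = d (Suc p) i (Mv d (Suc p) (Suc k) (d (Suc (Suc k)) (Suc p) y))"
      using Suc.IH[OF _ pk y'] Suc.prems by simp
    also have "\<dots> = d (Suc p) i (Mv d (Suc p) (Suc (Suc k)) y)" using pk by simp
    finally show ?thesis .
  qed
qed

lemma Mv_last: "Suc q \<le> k \<Longrightarrow> y \<in> X k \<Longrightarrow> d (Suc q) (Suc q) (Mv d (Suc q) k y) = Top d k q y"
proof (induction k arbitrary: y)
  case 0 then show ?case by simp
next
  case (Suc k)
  show ?case
  proof (cases "k = q")
    case True then show ?thesis by (simp add: Mv_self Top_self)
  next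
    case False
    then have qk: "Suc q \<le> k" using Suc.prems by auto
    have y': "d (Suc k) (Suc q) y \<in> X k" using Suc.prems qk face_in by simp
    have "d (Suc q) (Suc q) (Mv d (Suc q) (Suc k) y) = Top d k q (d (Suc k) (Suc q) y)"
      using qk Suc.IH[OF qk y'] by simp
    also have "\<dots> = Top d (Suc k) q y"
      using Top_face_hi[of q "Suc q" k y] qk Suc.prems by simp
    finally show ?thesis .
  qed
qed

lemma Mv_prev: "Suc q \<le> k \<Longrightarrow> y \<in> X k \<Longrightarrow> d (Suc q) q (Mv d (Suc q) k y) = Mv d q k y"
proof (induction k arbitrary: y)
  case 0 then show ?case by simp
next
  case (Suc k)
  show ?case
  proof (cases "k = q")
    case True then show ?thesis by (simp add: Mv_self)
  next
    case False
    then have qk: "Suc q \<le> k" using Suc.prems by auto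
    have y': "d (Suc k) (Suc q) y \<in> X k" using Suc.prems qk face_in by simp
    have "d (Suc q) q (Mv d (Suc q) (Suc k) y) = Mv d q k (d (Suc k) (Suc q) y)"
      using qk Suc.IH[OF qk y'] by simp
    also have "\<dots> = Mv d q (Suc k) y"
      using Mv_face_ge[of q "Suc q" k y] qk Suc.prems by simp
    finally show ?thesis .
  qed
qed

lemma Gf_face_hi: "k < i \<Longrightarrow> i \<le> Suc n \<Longrightarrow> k \<le> n \<Longrightarrow> x \<in> X (Suc n) \<Longrightarrow>
   Gf d p n k (d (Suc n) i x) = Gf d p (Suc n) k x"
proof -
  assume a: "k < i" "i \<le> Suc n" "k \<le> n" "x \<in> X (Suc n)"
  have "Top d n k (d (Suc n) i x) = Top d (Suc n) k x" by (rule Top_face_hi) (use a in auto)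
  then show ?thesis unfolding Gf_def by (simp only:)
qed

lemma Gf_face_mid: "p \<le> i \<Longrightarrow> i \<le> k \<Longrightarrow> k \<le> n \<Longrightarrow> x \<in> X (Suc n) \<Longrightarrow>
   Gf d p n k (d (Suc n) i x) = Gf d p (Suc n) (Suc k) x"
proof -
  assume a: "p \<le> i" "i \<le> k" "k \<le> n" "x \<in> X (Suc n)"
  have "Top d n k (d (Suc n) i x) = d (Suc k) i (Top d (Suc n) (Suc k) x)" by (rule Top_face_lo) (use a in auto)
  moreover have "Top d (Suc n) (Suc k) x \<in> X (Suc k)" by (rule Top_in) (use a in auto)
  ultimately show ?thesis unfolding Gf_def using Mv_face_ge a by (simp only:)
qed

lemma Gf_face_lo: "i < p \<Longrightarrow> p \<le> k \<Longrightarrow> k \<le> n \<Longrightarrow> x \<in> X (Suc n) \<Longrightarrow>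
   Gf d p n k (d (Suc n) i x) = d (Suc p) i (Gf d (Suc p) (Suc n) (Suc k) x)"
proof -
  assume a: "i < p" "p \<le> k" "k \<le> n" "x \<in> X (Suc n)"
  have "Top d n k (d (Suc n) i x) = d (Suc k) i (Top d (Suc n) (Suc k) x)" by (rule Top_face_lo) (use a in auto)
  moreover have "Top d (Suc n) (Suc k) x \<in> X (Suc k)" by (rule Top_in) (use a in auto)
  ultimately show ?thesis unfolding Gf_def using Mv_face_lt a by (simp only:)
qed

lemma Gf_last: "Suc q \<le> k \<Longrightarrow> k \<le> n \<Longrightarrow> x \<in> X n \<Longrightarrow>
   d (Suc q) (Suc q) (Gf d (Suc q) n k x) = Gf d q n q x"
  unfolding Gf_def using Mv_last Top_in Top_comp by (simp add: Mv_self)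

lemma Gf_prev: "Suc q \<le> k \<Longrightarrow> k \<le> n \<Longrightarrow> x \<in> X n \<Longrightarrow>
   d (Suc q) q (Gf d (Suc q) n k x) = Gf d q n k x"
  unfolding Gf_def using Mv_prev Top_in by simp

lemma Top_degen_lo: "m \<le> j \<Longrightarrow> j \<le> n \<Longrightarrow> x \<in> X n \<Longrightarrow> Top d (Suc n) m (s n j x) = Top d n m x"
proof (induction n arbitrary: x)
  case 0 then show ?case using ds_id2 by simp
next
  case (Suc n)
  show ?case
  proof (cases "j = Suc n")
    case True then show ?thesis using Suc.prems ds_id2 by simp
  next
    case False
    then have jn: "j \<le> n" using Suc.prems by auto
    have e: "d (Suc (Suc n)) (Suc (Suc n)) (s (Suc n) j x) = s n j (d (Suc n) (Suc n) x)"
      using ds_gt[of j "Suc (Suc n)" n x] jn Suc.prems by simp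
    have x': "d (Suc n) (Suc n) x \<in> X n" using Suc.prems face_in by simp
    show ?thesis using Suc.prems jn e Suc.IH[OF _ jn x'] by simp
  qed
qed

lemma Top_degen_hi: "j < m \<Longrightarrow> m \<le> Suc n \<Longrightarrow> x \<in> X n \<Longrightarrow>
   Top d (Suc n) m (s n j x) = s (m - 1) j (Top d n (m - 1) x)"
proof (induction n arbitrary: x)
  case 0 then have "m = 1" "j = 0" by auto
  with 0 show ?case by (simp add: Top_self)
next
  case (Suc n)
  show ?case
  proof (cases "m = Suc (Suc n)")
    case True then show ?thesis by (simp add: Top_self)
  next
    case False
    then have mn: "m \<le> Suc n" using Suc.prems by auto
    have e: "d (Suc (Suc n)) (Suc (Suc n)) (s (Suc n) j x) = s n j (d (Suc n) (Suc n) x)"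
      using ds_gt[of j "Suc (Suc n)" n x] mn Suc.prems by simp
    have x': "d (Suc n) (Suc n) x \<in> X n" using Suc.prems face_in by simp
    have "Top d (Suc (Suc n)) m (s (Suc n) j x) = Top d (Suc n) m (s n j (d (Suc n) (Suc n) x))"
      using mn e by simp
    also have "\<dots> = s (m - 1) j (Top d n (m - 1) (d (Suc n) (Suc n) x))"
      using Suc.IH[OF _ mn x'] Suc.prems by simp
    also have "\<dots> = s (m - 1) j (Top d (Suc n) (m - 1) x)"
    proof -
      have "m - 1 \<le> n" using mn Suc.prems by simp
      then show ?thesis by (simp only: Top_Suc)
    qed
    finally show ?thesis .
  qed
qed

lemma Mv1_degen: "1 \<le> k \<Longrightarrow> j \<le> k \<Longrightarrow> y \<in> X k \<Longrightarrow> Mv d 1 (Suc k) (s k j y) = Mv d 1 k y"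
proof (induction k arbitrary: y j)
  case 0 then show ?case by simp
next
  case (Suc k)
  have "Mv d 1 (Suc (Suc k)) (s (Suc k) j y) = Mv d 1 (Suc k) (d (Suc (Suc k)) 1 (s (Suc k) j y))"
    by simp
  also have "\<dots> = Mv d 1 (Suc k) y"
  proof (cases "j \<le> 1")
    case True
    then have "d (Suc (Suc k)) 1 (s (Suc k) j y) = y"
      using ds_id1[of j "Suc k" y] ds_id2[of j "Suc k" y] Suc.prems
      by (cases j) auto
    then show ?thesis by simp
  next
    case False
    then obtain k' where k: "k = Suc k'" using Suc.prems by (cases k) auto
    have e: "d (Suc (Suc k)) 1 (s (Suc k) j y) = s k (j - 1) (d (Suc k) 1 y)"
      using ds_lt[of 1 j k y] False Suc.prems by simp
    have y': "d (Suc k) 1 y \<in> X k" using Suc.prems face_in k by simp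
    have "Mv d 1 (Suc k) (s k (j - 1) (d (Suc k) 1 y)) = Mv d 1 k (d (Suc k) 1 y)"
      using Suc.IH[OF _ _ y'] k False Suc.prems by simp
    also have "\<dots> = Mv d 1 (Suc k) y" using k by simp
    finally show ?thesis using e by simp
  qed
  finally show ?case .
qed

lemma E_degen_lo: "1 \<le> k \<Longrightarrow> k \<le> j \<Longrightarrow> j \<le> n \<Longrightarrow> x \<in> X n \<Longrightarrow> Gf d 1 (Suc n) k (s n j x) = Gf d 1 n k x"
  unfolding Gf_def using Top_degen_lo by simp

lemma E_degen_hi: "2 \<le> k \<Longrightarrow> j < k \<Longrightarrow> k \<le> Suc n \<Longrightarrow> j \<le> n \<Longrightarrow> x \<in> X n \<Longrightarrow>
   Gf d 1 (Suc n) k (s n j x) = Gf d 1 n (k - 1) x"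
proof -
  assume a: "2 \<le> k" "j < k" "k \<le> Suc n" "j \<le> n" "x \<in> X n"
  then obtain k' where k: "k = Suc k'" by (cases k) auto
  have "Top d (Suc n) k (s n j x) = s (k - 1) j (Top d n (k - 1) x)"
    by (rule Top_degen_hi) (use a in auto)
  then have "Gf d 1 (Suc n) k (s n j x) = Mv d 1 (Suc k') (s k' j (Top d n k' x))"
    unfolding Gf_def k by simp
  also have "\<dots> = Mv d 1 k' (Top d n k' x)"
    using Mv1_degen Top_in a k by simp
  finally show ?thesis unfolding Gf_def k by simp
qed

lemma E_degen_0: "x \<in> X n \<Longrightarrow> Gf d 1 (Suc n) 1 (s n 0 x) = s 0 0 (Top d n 0 x)"
proof -
  assume a: "x \<in> X n"
  have "Top d (Suc n) 1 (s n 0 x) = s (1 - 1) 0 (Top d n (1 - 1) x)"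
    by (rule Top_degen_hi) (use a in auto)
  then show ?thesis unfolding Gf_def by simp
qed

end



definition Av :: "(nat \<Rightarrow> nat \<Rightarrow> 'x \<Rightarrow> 'x) \<Rightarrow> ('x \<Rightarrow> 'h::ab_group_add) \<Rightarrow> nat \<Rightarrow> nat \<Rightarrow> 'x \<Rightarrow> 'h" where
  "Av d \<alpha> n k x = (if k = 0 then 0 else \<alpha> (Gf d 1 n k x))"

definition fl :: "(nat \<Rightarrow> nat \<Rightarrow> 'x \<Rightarrow> 'x) \<Rightarrow> ('x \<Rightarrow> 'h::ab_group_add) \<Rightarrow> nat \<Rightarrow> 'x \<Rightarrow> 'h list" where
  "fl d \<alpha> n x = map (\<lambda>k. Av d \<alpha> n k x - Av d \<alpha> n (k - 1) x) [1..<Suc n]"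

definition Gm :: "(nat \<Rightarrow> nat \<Rightarrow> 'x \<Rightarrow> 'x) \<Rightarrow> ('x \<Rightarrow> 'h::ab_group_add) \<Rightarrow> nat \<Rightarrow> nat \<Rightarrow> 'x \<Rightarrow> 'h" where
  "Gm d \<gamma> n k x = (if k \<le> 1 then 0 else \<gamma> (Gf d 2 n k x))"

context ss begin

lemma down_Top: "down_to_2 d (Suc (Suc k)) x = Top d (Suc (Suc k)) 2 x"
proof (induction k arbitrary: x)
  case 0 then show ?case by (simp add: Top_self)
next
  case (Suc k) then show ?case by simp
qed



lemma eta_formula:
  assumes cc: "normalized_2_cocycle X d s \<gamma>"
  shows "x \<in> X (Suc n) \<Longrightarrow> eta d \<gamma> (Suc n) x = map (\<lambda>k. Gm d \<gamma> (Suc n) (Suc k) x - Gm d \<gamma> (Suc n) k x) [1..<Suc n]"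
proof (induction n arbitrary: x rule: nat_less_induct)
  case (1 n x)
  show ?case
  proof (cases n)
    case 0 then show ?thesis by simp
  next
    case (Suc m)
    show ?thesis
    proof (cases m)
      case 0
      then show ?thesis using Suc by (simp add: Gm_def Gf_def Top_self Mv_self eval_nat_numeral)
    next
      case (Suc n')
      have n: "n = Suc (Suc n')" using Suc \<open>n = Suc m\<close> by simp
      have x: "x \<in> X (Suc (Suc (Suc n')))" using 1 n by simp
      have d1: "d (Suc (Suc (Suc n'))) 1 x \<in> X (Suc (Suc n'))" using x face_in by simp
      have d0: "d (Suc (Suc (Suc n'))) 0 x \<in> X (Suc (Suc n'))" using x face_in by simp
      have IH1: "eta d \<gamma> (Suc (Suc n')) (d (Suc (Suc (Suc n'))) 1 x) =
         map (\<lambda>k. Gm d \<gamma> (Suc (Suc n')) (Suc k) (d (Suc (Suc (Suc n'))) 1 x) - Gm d \<gamma> (Suc (Suc n')) k (d (Suc (Suc (Suc n'))) 1 x)) [1..<Suc (Suc n')]"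
        using 1(1) n d1 by auto
      have IH0: "eta d \<gamma> (Suc (Suc n')) (d (Suc (Suc (Suc n'))) 0 x) =
         map (\<lambda>k. Gm d \<gamma> (Suc (Suc n')) (Suc k) (d (Suc (Suc (Suc n'))) 0 x) - Gm d \<gamma> (Suc (Suc n')) k (d (Suc (Suc (Suc n'))) 0 x)) [1..<Suc (Suc n')]"
        using 1(1) n d0 by auto
      let ?N = "Suc (Suc (Suc n'))"
      have KEY: "Gm d \<gamma> (Suc (Suc n')) j (d ?N 1 x) - Gm d \<gamma> (Suc (Suc n')) j (d ?N 0 x)
                 = Gm d \<gamma> ?N (Suc j) x - Gm d \<gamma> ?N 2 x" if j: "1 \<le> j" "j \<le> Suc (Suc n')" for j
      proof (cases "j = 1")
        case True then show ?thesis by (simp add: Gm_def numeral_2_eq_2)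
      next
        case False
        then have j2: "2 \<le> j" using j by simp
        define Q where "Q = Gf d 3 ?N (Suc j) x"
        have Q: "Q \<in> X 3" unfolding Q_def using Gf_in[of 3 "Suc j" ?N x] j2 j x by simp
        have f1: "Gf d 2 (Suc (Suc n')) j (d ?N 1 x) = d 3 1 Q"
          unfolding Q_def using Gf_face_lo[of 1 2 j "Suc (Suc n')" x] j2 j x by (simp add: eval_nat_numeral)
        have f0: "Gf d 2 (Suc (Suc n')) j (d ?N 0 x) = d 3 0 Q"
          unfolding Q_def using Gf_face_lo[of 0 2 j "Suc (Suc n')" x] j2 j x by (simp add: eval_nat_numeral)
        have f2: "d 3 2 Q = Gf d 2 ?N (Suc j) x"
          unfolding Q_def using Gf_prev[of 2 "Suc j" ?N x] j2 j x by (simp add: eval_nat_numeral)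
        have f3: "d 3 3 Q = Gf d 2 ?N 2 x"
          unfolding Q_def using Gf_last[of 2 "Suc j" ?N x] j2 j x by (simp add: eval_nat_numeral)
        have coc: "\<gamma> (d 3 0 Q) - \<gamma> (d 3 1 Q) + \<gamma> (d 3 2 Q) - \<gamma> (d 3 3 Q) = 0"
          using cc Q unfolding normalized_2_cocycle_def by blast
        show ?thesis using j2 f0 f1 f2 f3 coc unfolding Gm_def
          by (simp add: algebra_simps)
      qed
      have "eta d \<gamma> ?N x = \<gamma> (Top d ?N 2 x) #
          map2 (-) (eta d \<gamma> (Suc (Suc n')) (d ?N 1 x)) (eta d \<gamma> (Suc (Suc n')) (d ?N 0 x))"
        using down_Top[of "Suc n'" x] by simp
      also have "\<dots> = map (\<lambda>k. Gm d \<gamma> ?N (Suc k) x - Gm d \<gamma> ?N k x) [1..<?N]"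
      proof (intro nth_equalityI)
        fix t assume t: "t < length (\<gamma> (Top d ?N 2 x) #
          map2 (-) (eta d \<gamma> (Suc (Suc n')) (d ?N 1 x)) (eta d \<gamma> (Suc (Suc n')) (d ?N 0 x)))"
        show "(\<gamma> (Top d ?N 2 x) #
          map2 (-) (eta d \<gamma> (Suc (Suc n')) (d ?N 1 x)) (eta d \<gamma> (Suc (Suc n')) (d ?N 0 x))) ! t =
          map (\<lambda>k. Gm d \<gamma> ?N (Suc k) x - Gm d \<gamma> ?N k x) [1..<?N] ! t"
        proof (cases t)
          case 0 then show ?thesis by (simp add: Gm_def Gf_def Mv_self eval_nat_numeral del: upt_Suc)
        next
          case (Suc t')
          have t': "t' < Suc n'" using t Suc IH1 IH0 by (simp del: upt_Suc)
          have k1: "Gm d \<gamma> (Suc (Suc n')) (Suc (Suc t')) (d ?N 1 x) - Gm d \<gamma> (Suc (Suc n')) (Suc (Suc t')) (d ?N 0 x)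
                 = Gm d \<gamma> ?N (Suc (Suc (Suc t'))) x - Gm d \<gamma> ?N 2 x"
            using KEY[of "Suc (Suc t')"] t' by simp
          have k2: "Gm d \<gamma> (Suc (Suc n')) (Suc t') (d ?N 1 x) - Gm d \<gamma> (Suc (Suc n')) (Suc t') (d ?N 0 x)
                 = Gm d \<gamma> ?N (Suc (Suc t')) x - Gm d \<gamma> ?N 2 x"
            using KEY[of "Suc t'"] t' by simp
          define a1 where "a1 = Gm d \<gamma> (Suc (Suc n')) (Suc (Suc t')) (d ?N 1 x)"
          define b1 where "b1 = Gm d \<gamma> (Suc (Suc n')) (Suc t') (d ?N 1 x)"
          define a0 where "a0 = Gm d \<gamma> (Suc (Suc n')) (Suc (Suc t')) (d ?N 0 x)"
          define b0 where "b0 = Gm d \<gamma> (Suc (Suc n')) (Suc t') (d ?N 0 x)"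
          have lhs: "(\<gamma> (Top d ?N 2 x) #
            map2 (-) (eta d \<gamma> (Suc (Suc n')) (d ?N 1 x)) (eta d \<gamma> (Suc (Suc n')) (d ?N 0 x))) ! t
            = (a1 - b1) - (a0 - b0)"
            using Suc t' unfolding IH1 IH0 a1_def b1_def a0_def b0_def by (simp del: upt_Suc)
          have rhs: "map (\<lambda>k. Gm d \<gamma> ?N (Suc k) x - Gm d \<gamma> ?N k x) [1..<?N] ! t
            = Gm d \<gamma> ?N (Suc (Suc (Suc t'))) x - Gm d \<gamma> ?N (Suc (Suc t')) x"
            using Suc t' by (simp del: upt_Suc)
          have "(a1 - b1) - (a0 - b0) = (a1 - a0) - (b1 - b0)" by (simp add: algebra_simps)
          also have "\<dots> = Gm d \<gamma> ?N (Suc (Suc (Suc t'))) x - Gm d \<gamma> ?N (Suc (Suc t')) x"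
            using k1 k2 unfolding a1_def b1_def a0_def b0_def by simp
          finally show ?thesis using lhs rhs by simp
        qed
      qed (unfold IH1 IH0, simp del: upt_Suc)
      finally show ?thesis using n by simp
    qed
  qed
qed

end



definition phi :: "(nat \<Rightarrow> 'x set) \<Rightarrow> (nat \<Rightarrow> nat \<Rightarrow> 'x \<Rightarrow> 'x) \<Rightarrow> ('x \<Rightarrow> 'h::ab_group_add) \<Rightarrow> nat \<Rightarrow> 'x \<Rightarrow> 'h list \<times> 'x" where
  "phi X d \<alpha> n x = (if x \<in> X n then (fl d \<alpha> n x, x) else undefined)"

context ss begin

lemma fl_face_hi:
  assumes x: "x \<in> X (Suc n)" and i: "1 \<le> i" "i \<le> Suc n"
  shows "fl d \<alpha> n (d (Suc n) i x) = nerve_face (Suc n) i (fl d \<alpha> (Suc n) x)"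
proof -
  have A: "Av d \<alpha> n k (d (Suc n) i x) = Av d \<alpha> (Suc n) (if k < i then k else Suc k) x" if k: "k \<le> n" for k
  proof (cases "k = 0")
    case True then show ?thesis using i by (simp add: Av_def)
  next
    case False
    show ?thesis
    proof (cases "k < i")
      case True
      then show ?thesis using False Gf_face_hi[of k i n x 1] k i x by (simp add: Av_def)
    next
      case F2: False
      then show ?thesis using False Gf_face_mid[of 1 i k n x] k i x by (simp add: Av_def)
    qed
  qed
  have "nerve_face (Suc n) i (fl d \<alpha> (Suc n) x) =
     map (\<lambda>k. Av d \<alpha> (Suc n) (if k < i then k else Suc k) x - Av d \<alpha> (Suc n) (if k - 1 < i then k - 1 else Suc (k - 1)) x) [1..<Suc n]"
    unfolding fl_def using nf_diff[OF i, of "\<lambda>k. Av d \<alpha> (Suc n) k x"] by simp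
  also have "\<dots> = fl d \<alpha> n (d (Suc n) i x)"
    unfolding fl_def by (rule map_cong) (auto simp: A simp del: upt_Suc)
  finally show ?thesis by simp
qed

lemma fl_face_0:
  assumes cc: "normalized_2_cocycle X d s \<gamma>"
    and co: "\<forall>y\<in>X 2. coboundary1 d \<alpha> y = \<gamma> y"
    and x: "x \<in> X (Suc n)"
  shows "fl d \<alpha> n (d (Suc n) 0 x) = map2 (+) (tl (fl d \<alpha> (Suc n) x)) (eta d \<gamma> (Suc n) x)"
proof -
  have A: "Av d \<alpha> n k (d (Suc n) 0 x) = Gm d \<gamma> (Suc n) (Suc k) x + Av d \<alpha> (Suc n) (Suc k) x - Av d \<alpha> (Suc n) 1 x"
    if k: "k \<le> n" for k
  proof (cases "k = 0")
    case True then show ?thesis by (simp add: Av_def Gm_def)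
  next
    case False
    define T where "T = Gf d 2 (Suc n) (Suc k) x"
    have T: "T \<in> X 2" unfolding T_def using Gf_in[of 2 "Suc k" "Suc n" x] False k x by simp
    have f0: "Gf d 1 n k (d (Suc n) 0 x) = d 2 0 T"
      unfolding T_def using Gf_face_lo[of 0 1 k n x] False k x by (simp add: eval_nat_numeral)
    have f1: "d 2 1 T = Gf d 1 (Suc n) (Suc k) x"
      unfolding T_def using Gf_prev[of 1 "Suc k" "Suc n" x] False k x by (simp add: eval_nat_numeral)
    have f2: "d 2 2 T = Gf d 1 (Suc n) 1 x"
      unfolding T_def using Gf_last[of 1 "Suc k" "Suc n" x] False k x by (simp add: eval_nat_numeral)
    have cb: "\<alpha> (d 2 0 T) - \<alpha> (d 2 1 T) + \<alpha> (d 2 2 T) = \<gamma> T"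
      using co T unfolding coboundary1_def by blast
    have "Av d \<alpha> n k (d (Suc n) 0 x) = \<alpha> (d 2 0 T)" using False f0 by (simp add: Av_def)
    also have "\<dots> = \<gamma> T + \<alpha> (d 2 1 T) - \<alpha> (d 2 2 T)" using cb by (simp add: algebra_simps)
    also have "\<dots> = Gm d \<gamma> (Suc n) (Suc k) x + Av d \<alpha> (Suc n) (Suc k) x - Av d \<alpha> (Suc n) 1 x"
      using False f1 f2 unfolding T_def by (simp add: Av_def Gm_def)
    finally show ?thesis .
  qed
  have "map2 (+) (tl (fl d \<alpha> (Suc n) x)) (eta d \<gamma> (Suc n) x) =
     map (\<lambda>k. (Gm d \<gamma> (Suc n) (Suc k) x + Av d \<alpha> (Suc n) (Suc k) x) - (Gm d \<gamma> (Suc n) k x + Av d \<alpha> (Suc n) k x)) [1..<Suc n]"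
    unfolding fl_def eta_formula[OF cc x] using n0_diff[of "\<lambda>k. Av d \<alpha> (Suc n) k x" n "\<lambda>k. Gm d \<gamma> (Suc n) k x"]
    by simp
  also have "\<dots> = fl d \<alpha> n (d (Suc n) 0 x)"
    unfolding fl_def
  proof (rule map_cong)
    fix k assume "k \<in> set [1..<Suc n]"
    then have k: "1 \<le> k" "k \<le> n" by auto
    have a1: "Av d \<alpha> n k (d (Suc n) 0 x) = Gm d \<gamma> (Suc n) (Suc k) x + Av d \<alpha> (Suc n) (Suc k) x - Av d \<alpha> (Suc n) 1 x"
      using A k by simp
    have a2: "Av d \<alpha> n (k - 1) (d (Suc n) 0 x) = Gm d \<gamma> (Suc n) k x + Av d \<alpha> (Suc n) k x - Av d \<alpha> (Suc n) 1 x"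
      using A[of "k - 1"] k by simp
    show "(Gm d \<gamma> (Suc n) (Suc k) x + Av d \<alpha> (Suc n) (Suc k) x) - (Gm d \<gamma> (Suc n) k x + Av d \<alpha> (Suc n) k x)
      = Av d \<alpha> n k (d (Suc n) 0 x) - Av d \<alpha> n (k - 1) (d (Suc n) 0 x)"
      unfolding a1 a2 by (simp add: algebra_simps)
  qed simp
  finally show ?thesis by simp
qed

lemma fl_degen:
  assumes no: "\<forall>y\<in>X 0. \<alpha> (s 0 0 y) = 0"
    and x: "x \<in> X n" and j: "j \<le> n"
  shows "fl d \<alpha> (Suc n) (s n j x) = nerve_degen j (fl d \<alpha> n x)"
proof -
  have A: "Av d \<alpha> (Suc n) k (s n j x) = Av d \<alpha> n (if k \<le> j then k else k - 1) x" if k: "k \<le> Suc n" for k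
  proof -
    consider "k = 0" | "1 \<le> k" "k \<le> j" | "2 \<le> k" "j < k" | "k = 1" "j = 0" by linarith
    then show ?thesis
    proof cases
      case 1 then show ?thesis by (simp add: Av_def)
    next
      case 2 then show ?thesis using E_degen_lo[of k j n x] j x by (simp add: Av_def)
    next
      case 3 then show ?thesis using E_degen_hi[of k j n x] j x k by (simp add: Av_def)
    next
      case 4
      have "Top d n 0 x \<in> X 0" using Top_in x by simp
      then show ?thesis using 4 E_degen_0[OF x] no by (simp add: Av_def)
    qed
  qed
  have "nerve_degen j (fl d \<alpha> n x) =
     map (\<lambda>k. Av d \<alpha> n (if k \<le> j then k else k - 1) x - Av d \<alpha> n (if k - 1 \<le> j then k - 1 else k - 2) x) [1..<Suc (Suc n)]"
    unfolding fl_def using nd_diff[OF j, of "\<lambda>k. Av d \<alpha> n k x"] by simp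
  also have "\<dots> = fl d \<alpha> (Suc n) (s n j x)"
    unfolding fl_def
  proof (rule map_cong)
    fix k assume "k \<in> set [1..<Suc (Suc n)]"
    then have k: "1 \<le> k" "k \<le> Suc n" by auto
    have e: "(if k - 1 \<le> j then k - 1 else k - 2) = (if k - 1 \<le> j then k - 1 else k - 1 - 1)" by (simp add: numeral_2_eq_2)
    show "Av d \<alpha> n (if k \<le> j then k else k - 1) x - Av d \<alpha> n (if k - 1 \<le> j then k - 1 else k - 2) x =
      Av d \<alpha> (Suc n) k (s n j x) - Av d \<alpha> (Suc n) (k - 1) (s n j x)"
      using A[of k] A[of "k - 1"] k by (simp add: e numeral_2_eq_2)
  qed simp
  finally show ?thesis by simp
qed

lemma phi_Sec:
  assumes cc: "normalized_2_cocycle X d s \<gamma>" and al: "\<alpha> \<in> No X d s \<gamma>"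
  shows "phi X d \<alpha> \<in> Sec X d s \<gamma>"
proof -
  have no: "\<forall>y\<in>X 0. \<alpha> (s 0 0 y) = 0" and co: "\<forall>y\<in>X 2. coboundary1 d \<alpha> y = \<gamma> y"
    using al unfolding No_def normalized_1_cochain_def by auto
  show ?thesis unfolding Sec_def
  proof (intro CollectI conjI allI ballI impI)
    fix n x assume "x \<notin> X n" then show "phi X d \<alpha> n x = undefined" by (simp add: phi_def)
  next
    fix n x assume "x \<in> X n" then show "phi X d \<alpha> n x \<in> tw_simplices X n"
      by (simp add: phi_def tw_simplices_def fl_def)
  next
    fix n i x assume x: "x \<in> X (Suc n)" and i: "i \<le> Suc n"
    have dx: "d (Suc n) i x \<in> X n" using face_in x i by simp
    show "phi X d \<alpha> n (d (Suc n) i x) = tw_face d \<gamma> (Suc n) i (phi X d \<alpha> (Suc n) x)"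
    proof (cases "i = 0")
      case True
      then show ?thesis using x dx fl_face_0[OF cc co x] by (simp add: phi_def tw_face_def nerve_face_def)
    next
      case False
      then show ?thesis using x dx fl_face_hi[OF x _ i, of \<alpha>] by (simp add: phi_def tw_face_def)
    qed
  next
    fix n j x assume x: "x \<in> X n" and j: "j \<le> n"
    have sx: "s n j x \<in> X (Suc n)" using degen_in x j by simp
    show "phi X d \<alpha> (Suc n) (s n j x) = tw_degen s n j (phi X d \<alpha> n x)"
      using x sx fl_degen[OF no x j] by (simp add: phi_def tw_degen_def)
  next
    fix n x assume "x \<in> X n" then show "snd (phi X d \<alpha> n x) = x" by (simp add: phi_def)
  qed
qed

lemma phi_low: "low_values X d \<alpha> (phi X d \<alpha>)"
  unfolding low_values_def phi_def fl_def Av_def Gf_def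
  by (simp add: eval_nat_numeral Top_self Mv_self)

end



lemma list_det:
  fixes g g' :: "'h::ab_group_add list"
  assumes "length g = Suc (Suc m)" "length g' = Suc (Suc m)" "butlast g = butlast g'"
    "take m g @ [g ! m + g ! Suc m] @ drop (Suc (Suc m)) g = take m g' @ [g' ! m + g' ! Suc m] @ drop (Suc (Suc m)) g'"
  shows "g = g'"
proof (rule nth_equalityI)
  show "length g = length g'" using assms by simp
next
  fix k assume k: "k < length g"
  have b: "g ! t = g' ! t" if "t < Suc m" for t
  proof -
    have "butlast g ! t = butlast g' ! t" using assms(3) by (simp only:)
    moreover have "butlast g ! t = g ! t" using that assms(1) by (simp add: nth_butlast)
    moreover have "butlast g' ! t = g' ! t" using that assms(2) by (simp add: nth_butlast)
    ultimately show ?thesis by simp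
  qed
  have "(take m g @ [g ! m + g ! Suc m] @ drop (Suc (Suc m)) g) ! m = (take m g' @ [g' ! m + g' ! Suc m] @ drop (Suc (Suc m)) g') ! m"
    using assms(4) by simp
  then have "g ! m + g ! Suc m = g' ! m + g' ! Suc m" using assms by (simp add: nth_append)
  then have l: "g ! Suc m = g' ! Suc m" using b[of m] by simp
  show "g ! k = g' ! k"
    using k assms b l by (cases "k < Suc m") (auto simp: less_Suc_eq)
qed

context ss begin

lemma Sec_shape:
  assumes "\<phi> \<in> Sec X d s \<gamma>" "x \<in> X n"
  shows "\<phi> n x = (fst (\<phi> n x), x)" "length (fst (\<phi> n x)) = n"
proof -
  have "snd (\<phi> n x) = x" "\<phi> n x \<in> tw_simplices X n" using assms unfolding Sec_def by auto
  then show "\<phi> n x = (fst (\<phi> n x), x)" "length (fst (\<phi> n x)) = n"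
    unfolding tw_simplices_def by (auto simp: prod_eq_iff)
qed

lemma Sec_face:
  assumes "\<phi> \<in> Sec X d s \<gamma>" "x \<in> X (Suc n)" "i \<le> Suc n"
  shows "\<phi> n (d (Suc n) i x) = tw_face d \<gamma> (Suc n) i (\<phi> (Suc n) x)"
  using assms unfolding Sec_def by blast

lemma Sec_degen:
  assumes "\<phi> \<in> Sec X d s \<gamma>" "x \<in> X n" "j \<le> n"
  shows "\<phi> (Suc n) (s n j x) = tw_degen s n j (\<phi> n x)"
  using assms unfolding Sec_def by blast

lemma Sec_unique:
  assumes p: "\<phi> \<in> Sec X d s \<gamma>" and q: "\<psi> \<in> Sec X d s \<gamma>"
    and l0: "\<forall>x\<in>X 0. \<phi> 0 x = \<psi> 0 x" and l1: "\<forall>x\<in>X 1. \<phi> 1 x = \<psi> 1 x"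
  shows "\<phi> = \<psi>"
proof (intro ext)
  fix n x
  show "\<phi> n x = \<psi> n x"
  proof (induction n arbitrary: x rule: nat_less_induct)
    case (1 n x)
    show ?case
    proof (cases "x \<in> X n")
      case False then show ?thesis using p q unfolding Sec_def by auto
    next
      case x: True
      consider "n = 0" | "n = 1" | m where "n = Suc (Suc m)" by (metis One_nat_def not0_implies_Suc)
      then show ?thesis
      proof cases
        case 1 then show ?thesis using l0 x by simp
      next
        case 2 then show ?thesis using l1 x by simp
      next
        case 3
        define g where "g = fst (\<phi> n x)"
        define g' where "g' = fst (\<psi> n x)"
        have pg: "\<phi> n x = (g, x)" "length g = n" unfolding g_def using Sec_shape[OF p x] by auto
        have qg: "\<psi> n x = (g', x)" "length g' = n" unfolding g'_def using Sec_shape[OF q x] by auto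
        have xx: "x \<in> X (Suc (Suc m))" using x 3 by simp
        have IH: "\<phi> (Suc m) y = \<psi> (Suc m) y" for y using 1 3 by simp
        have e1: "nerve_face (Suc (Suc m)) (Suc (Suc m)) g = nerve_face (Suc (Suc m)) (Suc (Suc m)) g'"
          using Sec_face[OF p xx, of "Suc (Suc m)"] Sec_face[OF q xx, of "Suc (Suc m)"] IH pg qg 3
          by (simp add: tw_face_def)
        have e2: "nerve_face (Suc (Suc m)) (Suc m) g = nerve_face (Suc (Suc m)) (Suc m) g'"
          using Sec_face[OF p xx, of "Suc m"] Sec_face[OF q xx, of "Suc m"] IH pg qg 3
          by (simp add: tw_face_def)
        have "g = g'"
          using e1 e2 pg qg 3 by (intro list_det[of g m g']) (auto simp: nerve_face_def)
        then show ?thesis using pg qg by simp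
      qed
    qed
  qed
qed

definition alpha_of :: "(nat \<Rightarrow> 'x \<Rightarrow> 'h::ab_group_add list \<times> 'x) \<Rightarrow> 'x \<Rightarrow> 'h" where
  "alpha_of \<phi> x = (if x \<in> X 1 then hd (fst (\<phi> 1 x)) else undefined)"

lemma alpha_of_props:
  assumes p: "\<phi> \<in> Sec X d s \<gamma>"
  shows "alpha_of \<phi> \<in> No X d s \<gamma>" "low_values X d (alpha_of \<phi>) \<phi>"
proof -
  have one: "\<phi> 1 x = ([alpha_of \<phi> x], x)" if x: "x \<in> X 1" for x
  proof -
    obtain g where g: "\<phi> 1 x = (g, x)" "length g = 1" using Sec_shape[OF p x] by metis
    then obtain a where "g = [a]" by (metis One_nat_def length_0_conv length_Suc_conv)
    then show ?thesis using g x by (simp add: alpha_of_def)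
  qed
  have two: "\<phi> 2 x = ([alpha_of \<phi> (d 2 2 x), alpha_of \<phi> (d 2 1 x) - alpha_of \<phi> (d 2 2 x)], x)
     \<and> coboundary1 d (alpha_of \<phi>) x = \<gamma> x" if x: "x \<in> X 2" for x
  proof -
    obtain g where g: "\<phi> 2 x = (g, x)" "length g = 2" using Sec_shape[OF p x] by metis
    then obtain a b where ab: "g = [a, b]"
      by (metis (no_types, lifting) One_nat_def Suc_1 length_0_conv length_Suc_conv)
    have x2: "x \<in> X (Suc 1)" using x by (simp add: numeral_2_eq_2)
    have dx: "d 2 i x \<in> X 1" if "i \<le> 2" for i using face_in[of i 1 x] x that by (simp add: numeral_2_eq_2)
    have f0: "\<phi> 1 (d 2 0 x) = ([b + \<gamma> x], d 2 0 x)"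
      using Sec_face[OF p x2, of 0] g ab by (simp add: tw_face_def nerve_face_def eval_nat_numeral)
    have f1: "\<phi> 1 (d 2 1 x) = ([a + b], d 2 1 x)"
      using Sec_face[OF p x2, of 1] g ab by (simp add: tw_face_def nerve_face_def eval_nat_numeral)
    have f2: "\<phi> 1 (d 2 2 x) = ([a], d 2 2 x)"
      using Sec_face[OF p x2, of 2] g ab by (simp add: tw_face_def nerve_face_def eval_nat_numeral)
    have a0: "alpha_of \<phi> (d 2 0 x) = b + \<gamma> x" using one[OF dx[of 0]] f0 by simp
    have a1: "alpha_of \<phi> (d 2 1 x) = a + b" using one[OF dx[of 1]] f1 by simp
    have a2: "alpha_of \<phi> (d 2 2 x) = a" using one[OF dx[of 2]] f2 by simp
    show ?thesis using g ab a0 a1 a2 unfolding coboundary1_def by (simp add: algebra_simps)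
  qed
  show "low_values X d (alpha_of \<phi>) \<phi>"
    unfolding low_values_def
  proof (intro conjI ballI)
    fix x assume x: "x \<in> X 0"
    then show "\<phi> 0 x = ([], x)" using Sec_shape[OF p x] by (metis length_0_conv)
  next
    fix x assume "x \<in> X 1" then show "\<phi> 1 x = ([alpha_of \<phi> x], x)" by (rule one)
  next
    fix x assume "x \<in> X 2" then show "\<phi> 2 x = ([alpha_of \<phi> (d 2 2 x), alpha_of \<phi> (d 2 1 x) - alpha_of \<phi> (d 2 2 x)], x)"
      using two by blast
  qed
  have norm: "alpha_of \<phi> (s 0 0 y) = 0" if y: "y \<in> X 0" for y
  proof -
    have sy: "s 0 0 y \<in> X 1" using degen_in[of 0 0 y] y by simp
    have "\<phi> 0 y = ([], y)" using Sec_shape[OF p y] by (metis length_0_conv)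
    moreover have "\<phi> 1 (s 0 0 y) = tw_degen s 0 0 (\<phi> 0 y)" using Sec_degen[OF p y, of 0] by simp
    ultimately have "\<phi> 1 (s 0 0 y) = ([0], s 0 0 y)" by (simp add: tw_degen_def nerve_degen_def)
    then show ?thesis using one[OF sy] by simp
  qed
  show "alpha_of \<phi> \<in> No X d s \<gamma>"
    unfolding No_def normalized_1_cochain_def using norm two by (auto simp: alpha_of_def)
qed

end

theorem mainTheorem8:
  fixes X :: "nat \<Rightarrow> 'x set"
    and d :: "nat \<Rightarrow> nat \<Rightarrow> 'x \<Rightarrow> 'x"
    and s :: "nat \<Rightarrow> nat \<Rightarrow> 'x \<Rightarrow> 'x"
    and \<gamma> :: "'x \<Rightarrow> 'h::ab_group_add"
  assumes "simplicial_set X d s"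
    and "normalized_2_cocycle X d s \<gamma>"
  shows "(\<forall>\<alpha>\<in>No X d s \<gamma>. \<exists>!\<phi>. \<phi> \<in> Sec X d s \<gamma> \<and> low_values X d \<alpha> \<phi>)
       \<and> bij_betw (\<lambda>\<alpha>. THE \<phi>. \<phi> \<in> Sec X d s \<gamma> \<and> low_values X d \<alpha> \<phi>)
                  (No X d s \<gamma>) (Sec X d s \<gamma>)"
proof -
  interpret ss X d s using assms(1) by unfold_locales
  have U: "\<phi> = \<psi>" if "\<phi> \<in> Sec X d s \<gamma>" "low_values X d \<alpha> \<phi>" "\<psi> \<in> Sec X d s \<gamma>" "low_values X d \<alpha> \<psi>"
    for \<phi> \<psi> and \<alpha> :: "'x \<Rightarrow> 'h"
    using that by (intro Sec_unique) (auto simp: low_values_def)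
  have F: "(THE \<phi>. \<phi> \<in> Sec X d s \<gamma> \<and> low_values X d \<alpha> \<phi>) = phi X d \<alpha>" if "\<alpha> \<in> No X d s \<gamma>" for \<alpha>
    using that phi_Sec[OF assms(2)] phi_low U by (intro the_equality) blast+
  show ?thesis
  proof (intro conjI ballI)
    fix \<alpha> assume "\<alpha> \<in> No X d s \<gamma>"
    then show "\<exists>!\<phi>. \<phi> \<in> Sec X d s \<gamma> \<and> low_values X d \<alpha> \<phi>"
      using phi_Sec[OF assms(2)] phi_low U by blast
  next
    show "bij_betw (\<lambda>\<alpha>. THE \<phi>. \<phi> \<in> Sec X d s \<gamma> \<and> low_values X d \<alpha> \<phi>) (No X d s \<gamma>) (Sec X d s \<gamma>)"
      unfolding bij_betw_def
    proof (intro conjI)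
      show "inj_on (\<lambda>\<alpha>. THE \<phi>. \<phi> \<in> Sec X d s \<gamma> \<and> low_values X d \<alpha> \<phi>) (No X d s \<gamma>)"
      proof (rule inj_onI)
        fix \<alpha> \<beta> assume a: "\<alpha> \<in> No X d s \<gamma>" and b: "\<beta> \<in> No X d s \<gamma>"
          and e: "(THE \<phi>. \<phi> \<in> Sec X d s \<gamma> \<and> low_values X d \<alpha> \<phi>) = (THE \<phi>. \<phi> \<in> Sec X d s \<gamma> \<and> low_values X d \<beta> \<phi>)"
        then have e': "phi X d \<alpha> = phi X d \<beta>" using F by simp
        show "\<alpha> = \<beta>"
        proof
          fix x show "\<alpha> x = \<beta> x"
          proof (cases "x \<in> X 1")
            case True
            then have "phi X d \<alpha> 1 x = ([\<alpha> x], x)" "phi X d \<beta> 1 x = ([\<beta> x], x)"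
              using phi_low unfolding low_values_def by blast+
            then show ?thesis using e' by simp
          next
            case False then show ?thesis using a b unfolding No_def normalized_1_cochain_def by auto
          qed
        qed
      qed
    next
      show "(\<lambda>\<alpha>. THE \<phi>. \<phi> \<in> Sec X d s \<gamma> \<and> low_values X d \<alpha> \<phi>) ` No X d s \<gamma> = Sec X d s \<gamma>"
      proof
        show "(\<lambda>\<alpha>. THE \<phi>. \<phi> \<in> Sec X d s \<gamma> \<and> low_values X d \<alpha> \<phi>) ` No X d s \<gamma> \<subseteq> Sec X d s \<gamma>"
          using F phi_Sec[OF assms(2)] by auto
      next
        show "Sec X d s \<gamma> \<subseteq> (\<lambda>\<alpha>. THE \<phi>. \<phi> \<in> Sec X d s \<gamma> \<and> low_values X d \<alpha> \<phi>) ` No X d s \<gamma>"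
        proof
          fix \<phi> assume p: "\<phi> \<in> Sec X d s \<gamma>"
          have th: "(THE \<psi>. \<psi> \<in> Sec X d s \<gamma> \<and> low_values X d (alpha_of \<phi>) \<psi>) = \<phi>"
            using p alpha_of_props[OF p] U by (intro the_equality) blast+
          show "\<phi> \<in> (\<lambda>\<alpha>. THE \<phi>. \<phi> \<in> Sec X d s \<gamma> \<and> low_values X d \<alpha> \<phi>) ` No X d s \<gamma>"
          proof (rule image_eqI[where x="alpha_of \<phi>"])
            show "\<phi> = (THE \<psi>. \<psi> \<in> Sec X d s \<gamma> \<and> low_values X d (alpha_of \<phi>) \<psi>)" using th by simp
            show "alpha_of \<phi> \<in> No X d s \<gamma>" by (rule alpha_of_props(1)[OF p])
          qed
        qed
      qed
    qed
  qed
qed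



end
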